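(* Let $F=(A,R)$ be an abstract argumentation framework and $S\subseteq A$. Then $S$ is admissible in $F$ if and only if either $S=\emptyset$, or $S=S_1\cup S_2$ where $S_1$ is an initial set of $F$ and $S_2$ is an admissible set of the reduct $F^{S_1}$.
   Context: An abstract argumentation framework is a pair $F=(A,R)$ with $A$ a finite set of arguments and $R\subseteq A\times A$ (write $a\to b$ for $(a,b)\in R$). For $S\subseteq A$: $S^+=\{a\in A\mid \exists b\in S: b\to a\}$, $S^-=\{a\in A\mid \exists b\in S: a\to b\}$. $S$ is conflict-free if there are no $a,b\in S$ with $a\to b$. $S$ defends $b$ if for every $a$ with $a\to b$ there is $c\in S$ with $c\to a$. $S$ is admissible if it is conflict-free and defends all its elements. An initial set of $F$ is a non-empty admissible set $S$ such that no non-empty admissible $S'\subsetneq S$ exists. For $X\subseteq A$, $F|_X=(X,R\cap(X\times X))$. The $S$-reduct of $F$ is $F^{S}=F|_{A\setminus(S\cup S^+)}$. *)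

theory Defs
  imports Main
begin

definition AF :: "'a set \<Rightarrow> ('a \<times> 'a) set \<Rightarrow> bool" where
  "AF A R \<longleftrightarrow> finite A \<and> R \<subseteq> A \<times> A"

definition attacked_by :: "'a set \<Rightarrow> ('a \<times> 'a) set \<Rightarrow> 'a set \<Rightarrow> 'a set" where
  "attacked_by A R S = {a \<in> A. \<exists>b\<in>S. (b, a) \<in> R}"

definition attackers_of :: "'a set \<Rightarrow> ('a \<times> 'a) set \<Rightarrow> 'a set \<Rightarrow> 'a set" where
  "attackers_of A R S = {a \<in> A. \<exists>b\<in>S. (a, b) \<in> R}"

definition conflict_free :: "('a \<times> 'a) set \<Rightarrow> 'a set \<Rightarrow> bool" where
  "conflict_free R S \<longleftrightarrow> (\<forall>a\<in>S. \<forall>b\<in>S. (a, b) \<notin> R)"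

definition defends :: "('a \<times> 'a) set \<Rightarrow> 'a set \<Rightarrow> 'a \<Rightarrow> bool" where
  "defends R S b \<longleftrightarrow> (\<forall>a. (a, b) \<in> R \<longrightarrow> (\<exists>c\<in>S. (c, a) \<in> R))"

definition admissible :: "'a set \<Rightarrow> ('a \<times> 'a) set \<Rightarrow> 'a set \<Rightarrow> bool" where
  "admissible A R S \<longleftrightarrow> S \<subseteq> A \<and> conflict_free R S \<and> (\<forall>b\<in>S. defends R S b)"

definition initial :: "'a set \<Rightarrow> ('a \<times> 'a) set \<Rightarrow> 'a set \<Rightarrow> bool" where
  "initial A R S \<longleftrightarrow> S \<noteq> {} \<and> admissible A R S \<and>
     \<not> (\<exists>S'. S' \<noteq> {} \<and> S' \<subset> S \<and> admissible A R S')"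

definition restrict_rel :: "('a \<times> 'a) set \<Rightarrow> 'a set \<Rightarrow> ('a \<times> 'a) set" where
  "restrict_rel R X = R \<inter> (X \<times> X)"

definition reduct_args :: "'a set \<Rightarrow> ('a \<times> 'a) set \<Rightarrow> 'a set \<Rightarrow> 'a set" where
  "reduct_args A R S = A - (S \<union> attacked_by A R S)"

definition reduct_rel :: "'a set \<Rightarrow> ('a \<times> 'a) set \<Rightarrow> 'a set \<Rightarrow> ('a \<times> 'a) set" where
  "reduct_rel A R S = restrict_rel R (reduct_args A R S)"

end

theory Submission
  imports Defs
begin

theorem theorem1:
  fixes A :: "'a set" and R :: "('a \<times> 'a) set" and S :: "'a set"
  assumes "AF A R" and "S \<subseteq> A"
  shows "admissible A R S \<longleftrightarrow>
           (S = {} \<or>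
            (\<exists>S1 S2. S = S1 \<union> S2 \<and> initial A R S1 \<and>
               admissible (reduct_args A R S1) (reduct_rel A R S1) S2))"
proof
  assume adm: "admissible A R S"
  show "S = {} \<or>
            (\<exists>S1 S2. S = S1 \<union> S2 \<and> initial A R S1 \<and>
               admissible (reduct_args A R S1) (reduct_rel A R S1) S2)"
  proof (cases "S = {}")
    case True then show ?thesis by simp
  next
    case False
    have finA: "finite A" using assms(1) by (simp add: AF_def)
    let ?P = "\<lambda>T. T \<noteq> {} \<and> T \<subseteq> S \<and> admissible A R T"
    have "?P S" using False adm by simp
    then have "\<exists>S1. ?P S1 \<and> (\<forall>T. ?P T \<longrightarrow> card S1 \<le> card T)"
      by (rule ex_has_least_nat)
    then obtain S1 where H: "?P S1 \<and> (\<forall>T. ?P T \<longrightarrow> card S1 \<le> card T)" ..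
    have P1: "?P S1" using H by (rule conjunct1)
    have minc: "\<forall>T. ?P T \<longrightarrow> card S1 \<le> card T" using H by (rule conjunct2)
    have "S1 \<subseteq> A" using P1 assms(2) by auto
    then have finS1: "finite S1" using finA by (rule finite_subset)
    have nomin: "\<not> (\<exists>S'. S' \<noteq> {} \<and> S' \<subset> S1 \<and> admissible A R S')"
    proof
      assume "\<exists>S'. S' \<noteq> {} \<and> S' \<subset> S1 \<and> admissible A R S'"
      then obtain S' where "S' \<noteq> {}" "S' \<subset> S1" "admissible A R S'" by blast
      moreover have "card S' < card S1" using \<open>S' \<subset> S1\<close> finS1 psubset_card_mono by blast
      moreover have "S' \<subseteq> S" using \<open>S' \<subset> S1\<close> P1 by blast
      ultimately have "card S1 \<le> card S'" using minc by blast
      then show False using \<open>card S' < card S1\<close> by simp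
    qed
    have init: "initial A R S1"
      unfolding initial_def using P1 nomin by blast
    let ?S2 = "S - S1"
    have cf: "conflict_free R S" and def: "\<forall>b\<in>S. defends R S b"
      using adm by (auto simp: admissible_def)
    have "admissible (reduct_args A R S1) (reduct_rel A R S1) ?S2"
      unfolding admissible_def
    proof (intro conjI ballI)
      show "?S2 \<subseteq> reduct_args A R S1"
      proof
        fix x assume x: "x \<in> ?S2"
        have "\<forall>y\<in>S1. (y, x) \<notin> R" using cf x P1 unfolding conflict_free_def by blast
        then show "x \<in> reduct_args A R S1" using x assms(2)
          unfolding reduct_args_def attacked_by_def by blast
      qed
      show "conflict_free (reduct_rel A R S1) ?S2"
        using cf by (auto simp: reduct_rel_def restrict_rel_def conflict_free_def)
      fix b assume b: "b \<in> ?S2"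
      show "defends (reduct_rel A R S1) ?S2 b"
        unfolding defends_def
      proof (intro allI impI)
        fix a assume ab: "(a, b) \<in> reduct_rel A R S1"
        then have aR: "(a,b) \<in> R" and aX: "a \<in> reduct_args A R S1"
          and bX: "b \<in> reduct_args A R S1"
          by (auto simp: reduct_rel_def restrict_rel_def)
        obtain c where c: "c \<in> S" "(c, a) \<in> R" using def b aR by (auto simp: defends_def)
        have "c \<notin> S1" using c aX by (auto simp: reduct_args_def attacked_by_def)
        moreover have "\<forall>y\<in>S1. (y, c) \<notin> R" using cf c P1 unfolding conflict_free_def by blast
        moreover have "c \<in> reduct_args A R S1"
          using c \<open>c \<notin> S1\<close> calculation(2) assms(2) unfolding reduct_args_def attacked_by_def by blast
        ultimately show "\<exists>c\<in>?S2. (c, a) \<in> reduct_rel A R S1"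
          using c aX by (auto simp: reduct_rel_def restrict_rel_def)
      qed
    qed
    moreover have "S = S1 \<union> ?S2" using P1 by auto
    ultimately show ?thesis using init by blast
  qed
next
  assume h: "S = {} \<or>
            (\<exists>S1 S2. S = S1 \<union> S2 \<and> initial A R S1 \<and>
               admissible (reduct_args A R S1) (reduct_rel A R S1) S2)"
  show "admissible A R S"
  proof (cases "S = {}")
    case True then show ?thesis by (simp add: admissible_def conflict_free_def)
  next
    case False
    then obtain S1 S2 where S: "S = S1 \<union> S2" and i: "initial A R S1"
      and a2: "admissible (reduct_args A R S1) (reduct_rel A R S1) S2" using h by blast
    have RA: "R \<subseteq> A \<times> A" using assms(1) by (simp add: AF_def)
    have a1: "admissible A R S1" using i by (simp add: initial_def)
    have S1A: "S1 \<subseteq> A" and cf1: "conflict_free R S1" and d1: "\<forall>b\<in>S1. defends R S1 b"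
      using a1 by (auto simp: admissible_def)
    have S2X: "S2 \<subseteq> reduct_args A R S1" and cf2: "conflict_free (reduct_rel A R S1) S2"
      and d2: "\<forall>b\<in>S2. defends (reduct_rel A R S1) S2 b"
      using a2 by (auto simp: admissible_def)
    have notatt: "\<And>x y. x \<in> S1 \<Longrightarrow> y \<in> S2 \<Longrightarrow> (x, y) \<notin> R"
      using S2X by (auto simp: reduct_args_def attacked_by_def)
    have notS1: "\<And>y. y \<in> S2 \<Longrightarrow> y \<notin> S1"
      using S2X by (auto simp: reduct_args_def)
    have cf: "conflict_free R S"
      unfolding conflict_free_def
    proof (intro ballI)
      fix x y assume x: "x \<in> S" and y: "y \<in> S"
      show "(x, y) \<notin> R"
      proof
        assume xy: "(x, y) \<in> R"
        consider "x \<in> S1" "y \<in> S1" | "x \<in> S1" "y \<in> S2" | "x \<in> S2" "y \<in> S1" | "x \<in> S2" "y \<in> S2"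
          using x y S by blast
        then show False
        proof cases
          case 1 then show ?thesis using cf1 xy by (auto simp: conflict_free_def)
        next
          case 2 then show ?thesis using notatt xy by blast
        next
          case 3
          then obtain c where "c \<in> S1" "(c, x) \<in> R" using d1 xy by (auto simp: defends_def)
          then show ?thesis using notatt 3 by blast
        next
          case 4
          then have "(x, y) \<in> reduct_rel A R S1" using xy S2X
            by (auto simp: reduct_rel_def restrict_rel_def)
          then show ?thesis using cf2 4 by (auto simp: conflict_free_def)
        qed
      qed
    qed
    have def: "\<forall>b\<in>S. defends R S b"
    proof
      fix b assume b: "b \<in> S"
      show "defends R S b" unfolding defends_def
      proof (intro allI impI)
        fix a assume ab: "(a, b) \<in> R"
        show "\<exists>c\<in>S. (c, a) \<in> R"
        proof (cases "b \<in> S1")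
          case True then show ?thesis using d1 ab S by (auto simp: defends_def)
        next
          case False
          then have bS2: "b \<in> S2" using b S by blast
          have aA: "a \<in> A" using ab RA by auto
          show ?thesis
          proof (cases "a \<in> attacked_by A R S1")
            case True then show ?thesis using S by (auto simp: attacked_by_def)
          next
            case nat: False
            have "a \<notin> S1" using notatt bS2 ab by blast
            then have "a \<in> reduct_args A R S1" using nat aA by (simp add: reduct_args_def)
            then have "(a, b) \<in> reduct_rel A R S1" using ab bS2 S2X
              by (auto simp: reduct_rel_def restrict_rel_def)
            then obtain c where "c \<in> S2" "(c, a) \<in> reduct_rel A R S1"
              using d2 bS2 by (auto simp: defends_def)
            then show ?thesis using S by (auto simp: reduct_rel_def restrict_rel_def)
          qed
        qed
      qed
    qed
    show ?thesis using cf def assms(2) by (simp add: admissible_def)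
  qed
qed

end
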